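(* Let $\mathscr{X}$ be a totally bounded normed metric space, consider a channel with transition mapping $N$ as described in the context, and let $0\le\delta<m_{\mathscr{Y}}(V_N)$. Then $$C^\delta_N=\sup\Big\{ I_{\tilde\delta/|[\![X]\!]|}(Y;X)\ :\ X\text{ a transmitted UV with }[\![X]\!]\subseteq\mathscr{X},\ 0\le\tilde\delta\le \delta/m_{\mathscr{Y}}([\![Y]\!])\Big\}\ \text{bits},$$ where $Y$ is the received UV corresponding to $X$.
   Context: Uncertain variables (UVs): a UV is a map $U$ from a sample space $\Omega$ to a set; jointly considered UVs share $\Omega$. $[\![U]\!]=\{U(\omega)\}$; $[\![U|w]\!]=\{U(\omega):W(\omega)=w\}$, $[\![U|W]\!]=\{[\![U|w]\!]:w\in[\![W]\!]\}$. An uncertainty function on a set $\mathscr{U}$ is a map $m$ on subsets of $\mathscr{U}$ with $m(\emptyset)=0$, $0<m(S)<\infty$ for nonempty $S$, $\max\{m(S_1),m(S_2)\}\le m(S_1\cup S_2)$. $\delta$-mutual information: for UVs $U$ (values in $\mathscr{U}$ with uncertainty function $m_{\mathscr{U}}$) and $W$, points $u,u'\in[\![U]\!]$ are $\delta$-connected via $[\![U|W]\!]$ if there are $w_1,\dots,w_N\in[\![W]\!]$ with $u\in[\![U|w_1]\!]$, $u'\in[\![U|w_N]\!]$, $m_{\mathscr{U}}([\![U|w_i]\!]\cap[\![U|w_{i-1}]\!])/m_{\mathscr{U}}([\![U]\!])>\delta$ for $1<i\le N$; a set is $\delta$-connected if all pairs of its points are. A $\delta$-overlap family $[\![U|W]\!]^*_\delta$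 is a family of distinct subsets covering $[\![U]\!]$, of largest cardinality among covering families such that (i) each member is $\delta$-connected and contains some $[\![U|w]\!]$; (ii) distinct members $S_1,S_2$ satisfy $m_{\mathscr{U}}(S_1\cap S_2)\le\delta\, m_{\mathscr{U}}([\![U]\!])$; (iii) each $[\![U|w]\!]$ lies in some member. $I_\delta(U;W)=\log_2|[\![U|W]\!]^*_\delta|$ if such a family exists, else $0$. Channel: $\mathscr{Y}$ is the output set, $N$ maps each $x\in\mathscr{X}$ to a set $N(x)\subseteq\mathscr{Y}$; $m_{\mathscr{X}},m_{\mathscr{Y}}$ are uncertainty functions on $\mathscr{X},\mathscr{Y}$ with $m_{\mathscr{Y}}(\mathscr{Y})=1$. $V_N=N(x^* )$ where $x^*$ minimizes $m_{\mathscr{Y}}(N(x))$ over $\mathscr{X}$. A codebook is a discrete set $\mathcal{C}\subseteq\mathscr{X}$; $e_N(x_1,x_2)=m_{\mathscr{Y}}(N(x_1)\cap N(x_2))/m_{\mathscr{Y}}(\mathscr{Y})$; $\mathcal{C}$ is $(N,\delta)$-distinguishable if $e_N(x_1,x_2)\le\delta/|\mathcal{C}|$ for all distinct $x_1,x_2\in\mathcal{C}$; $C^\delta_N=\sup\log_2|\mathcal{C}|$ over $(N,\delta)$-distinguishable codebooks. For a codebook $\mathcal{C}$, the transmitted UV $X$ and received UV $Y$ satisfy $[\![X]\!]=\mathcal{C}$, $[\![Y]\!]=\bigcup_{x\in\mathcal{C}}N(x)$, $[\![Y|x]\!]=\{y\in[\![Y]\!]:y\in N(x)\}$, $[\![X|y]\!]=\{x\in[\![X]\!]:y\in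 N(x)\}$. *)

theory Defs
  imports "HOL-Analysis.Analysis"
begin

definition uncertainty_function :: "('a set \<Rightarrow> real) \<Rightarrow> 'a set \<Rightarrow> bool" where
  "uncertainty_function m A \<longleftrightarrow>
     m {} = 0 \<and>
     (\<forall>S. S \<subseteq> A \<and> S \<noteq> {} \<longrightarrow> 0 < m S) \<and>
     (\<forall>S1 S2. S1 \<subseteq> A \<and> S2 \<subseteq> A \<longrightarrow> max (m S1) (m S2) \<le> m (S1 \<union> S2))"

text \<open>Generic setting: U is the range [[U]], Wr the range [[W]], F w = [[U|w]],
  m the uncertainty function on the value set of U.\<close>

definition delta_connected ::
  "('u set \<Rightarrow> real) \<Rightarrow> 'u set \<Rightarrow> 'w set \<Rightarrow> ('w \<Rightarrow> 'u set) \<Rightarrow> real \<Rightarrow> 'u \<Rightarrow> 'u \<Rightarrow> bool" where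
  "delta_connected m U Wr F \<delta> u u' \<longleftrightarrow>
     (\<exists>ws. ws \<noteq> [] \<and> set ws \<subseteq> Wr \<and> u \<in> F (hd ws) \<and> u' \<in> F (last ws) \<and>
        (\<forall>i. 0 < i \<and> i < length ws \<longrightarrow>
           m (F (ws ! i) \<inter> F (ws ! (i - 1))) / m U > \<delta>))"

definition delta_connected_set ::
  "('u set \<Rightarrow> real) \<Rightarrow> 'u set \<Rightarrow> 'w set \<Rightarrow> ('w \<Rightarrow> 'u set) \<Rightarrow> real \<Rightarrow> 'u set \<Rightarrow> bool" where
  "delta_connected_set m U Wr F \<delta> S \<longleftrightarrow>
     (\<forall>u\<in>S. \<forall>u'\<in>S. delta_connected m U Wr F \<delta> u u')"

definition admissible_family ::
  "('u set \<Rightarrow> real) \<Rightarrow> 'u set \<Rightarrow> 'w set \<Rightarrow> ('w \<Rightarrow> 'u set) \<Rightarrow> real \<Rightarrow> 'u set set \<Rightarrow> bool" where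
  "admissible_family m U Wr F \<delta> \<S> \<longleftrightarrow>
     (\<forall>S\<in>\<S>. S \<subseteq> U) \<and> \<Union>\<S> = U \<and>
     (\<forall>S\<in>\<S>. delta_connected_set m U Wr F \<delta> S \<and> (\<exists>w\<in>Wr. F w \<subseteq> S)) \<and>
     (\<forall>S1\<in>\<S>. \<forall>S2\<in>\<S>. S1 \<noteq> S2 \<longrightarrow> m (S1 \<inter> S2) \<le> \<delta> * m U) \<and>
     (\<forall>w\<in>Wr. \<exists>S\<in>\<S>. F w \<subseteq> S)"

text \<open>A delta-overlap family: admissible and of largest cardinality among admissible
  families (cardinality comparison via injections, so infinite families are allowed).\<close>
definition overlap_family ::
  "('u set \<Rightarrow> real) \<Rightarrow> 'u set \<Rightarrow> 'w set \<Rightarrow> ('w \<Rightarrow> 'u set) \<Rightarrow> real \<Rightarrow> 'u set set \<Rightarrow> bool" where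
  "overlap_family m U Wr F \<delta> \<S> \<longleftrightarrow>
     admissible_family m U Wr F \<delta> \<S> \<and>
     (\<forall>\<S>'. admissible_family m U Wr F \<delta> \<S>' \<longrightarrow> (\<exists>f. inj_on f \<S>' \<and> f ` \<S>' \<subseteq> \<S>))"

text \<open>All overlap families have the same
  cardinality, so the choice is immaterial.\<close>
definition delta_mutual_info ::
  "('u set \<Rightarrow> real) \<Rightarrow> 'u set \<Rightarrow> 'w set \<Rightarrow> ('w \<Rightarrow> 'u set) \<Rightarrow> real \<Rightarrow> ereal" where
  "delta_mutual_info m U Wr F \<delta> =
     (if \<exists>\<S>. overlap_family m U Wr F \<delta> \<S>
      then (let \<S> = (SOME \<S>. overlap_family m U Wr F \<delta> \<S>) in
            if finite \<S> then ereal (log 2 (real (card \<S>))) else \<infinity>)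
      else 0)"

text \<open>Codebooks: discrete (here: finite, nonempty) subsets of the input set.\<close>
definition codebook :: "'x set \<Rightarrow> 'x set \<Rightarrow> bool" where
  "codebook Xs C \<longleftrightarrow> C \<subseteq> Xs \<and> finite C \<and> C \<noteq> {}"

definition e_N :: "('y set \<Rightarrow> real) \<Rightarrow> 'y set \<Rightarrow> ('x \<Rightarrow> 'y set) \<Rightarrow> 'x \<Rightarrow> 'x \<Rightarrow> real" where
  "e_N mY Ys N x1 x2 = mY (N x1 \<inter> N x2) / mY Ys"

definition distinguishable ::
  "('y set \<Rightarrow> real) \<Rightarrow> 'y set \<Rightarrow> ('x \<Rightarrow> 'y set) \<Rightarrow> real \<Rightarrow> 'x set \<Rightarrow> bool" where
  "distinguishable mY Ys N \<delta> C \<longleftrightarrow>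
     (\<forall>x1\<in>C. \<forall>x2\<in>C. x1 \<noteq> x2 \<longrightarrow> e_N mY Ys N x1 x2 \<le> \<delta> / real (card C))"

definition capacity_delta ::
  "'x set \<Rightarrow> ('y set \<Rightarrow> real) \<Rightarrow> 'y set \<Rightarrow> ('x \<Rightarrow> 'y set) \<Rightarrow> real \<Rightarrow> ereal" where
  "capacity_delta Xs mY Ys N \<delta> =
     Sup {ereal (log 2 (real (card C))) | C. codebook Xs C \<and> distinguishable mY Ys N \<delta> C}"

text \<open>Transmitted UV X with range C and received UV Y: [[Y]] = \<Union>N`C, [[Y|x]] = N x \<inter> [[Y]].\<close>
definition received_range :: "('x \<Rightarrow> 'y set) \<Rightarrow> 'x set \<Rightarrow> 'y set" where
  "received_range N C = (\<Union>x\<in>C. N x)"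

definition cond_received :: "('x \<Rightarrow> 'y set) \<Rightarrow> 'x set \<Rightarrow> 'x \<Rightarrow> 'y set" where
  "cond_received N C x = {y \<in> received_range N C. y \<in> N x}"

end

theory Submission
  imports Defs
begin

lemma unc_mono:
  assumes "uncertainty_function m A" "S \<subseteq> T" "T \<subseteq> A"
  shows "m S \<le> m T"
proof -
  have "max (m S) (m T) \<le> m (S \<union> T)"
  proof -
    have "S \<subseteq> A" using assms(2,3) by blast
    then show ?thesis using assms(1,3) unfolding uncertainty_function_def by blast
  qed
  moreover have "S \<union> T = T" using assms(2) by blast
  ultimately show ?thesis by simp
qed

lemma adm_D:
  assumes "admissible_family m U Wr F d S"
  shows "\<forall>T\<in>S. T \<subseteq> U" "\<forall>T\<in>S. \<exists>w\<in>Wr. F w \<subseteq> T"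
    "\<forall>S1\<in>S. \<forall>S2\<in>S. S1 \<noteq> S2 \<longrightarrow> m (S1 \<inter> S2) \<le> d * m U"
  using assms unfolding admissible_family_def by simp_all

lemma key_inj:
  assumes adm: "admissible_family m U C F d S'"
    and unc: "uncertainty_function m Ys" and UY: "U \<subseteq> Ys"
    and big: "\<forall>w\<in>C. d * m U < m (F w)"
  shows "\<exists>f. inj_on f S' \<and> f ` S' \<subseteq> C \<and> (\<forall>S\<in>S'. F (f S) \<subseteq> S)"
proof -
  define f where "f S = (SOME w. w \<in> C \<and> F w \<subseteq> S)" for S
  have f: "f S \<in> C \<and> F (f S) \<subseteq> S" if "S \<in> S'" for S
  proof -
    have "\<exists>w\<in>C. F w \<subseteq> S" using adm_D(2)[OF adm] that by (rule bspec)
    then have "\<exists>w. w \<in> C \<and> F w \<subseteq> S" by (simp only: Bex_def)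
    then show ?thesis unfolding f_def by (rule someI_ex)
  qed
  have "inj_on f S'"
  proof (rule inj_onI, rule ccontr)
    fix S1 S2 assume s: "S1 \<in> S'" "S2 \<in> S'" "f S1 = f S2" "S1 \<noteq> S2"
    then have le: "m (S1 \<inter> S2) \<le> d * m U" using adm_D(3)[OF adm] by blast
    have sub: "F (f S1) \<subseteq> S1 \<inter> S2" using f[OF s(1)] f[OF s(2)] s(3) by auto
    have "S1 \<subseteq> U" using adm_D(1)[OF adm] s(1) by (rule bspec)
    then have "S1 \<inter> S2 \<subseteq> Ys" using UY by blast
    then have "m (F (f S1)) \<le> m (S1 \<inter> S2)"
      by (rule unc_mono[OF unc sub])
    moreover have "d * m U < m (F (f S1))" using big f[OF s(1)] by blast
    ultimately show False using le by linarith
  qed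
  then show ?thesis using f by blast
qed

lemma cond_rec: "x \<in> C \<Longrightarrow> cond_received N C x = N x"
  unfolding cond_received_def received_range_def by auto

theorem theorem8:
  fixes Xs :: "'x::real_normed_vector set"
    and Ys :: "'y set"
    and N :: "'x \<Rightarrow> 'y set"
    and mX :: "'x set \<Rightarrow> real"
    and mY :: "'y set \<Rightarrow> real"
    and xstar :: 'x
    and \<delta> :: real
  assumes tb: "totally_bounded Xs"
    and N_out: "\<forall>x\<in>Xs. N x \<subseteq> Ys"
    and mX_unc: "uncertainty_function mX Xs"
    and mY_unc: "uncertainty_function mY Ys"
    and mY_norm: "mY Ys = 1"
    and xstar_in: "xstar \<in> Xs"
    and xstar_min: "\<forall>x\<in>Xs. mY (N xstar) \<le> mY (N x)"
    and delta_nonneg: "0 \<le> \<delta>"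
    and delta_lt: "\<delta> < mY (N xstar)"
  shows "capacity_delta Xs mY Ys N \<delta> =
    Sup {delta_mutual_info mY (received_range N C) C (cond_received N C) (\<delta>' / real (card C)) | C \<delta>'.
           codebook Xs C \<and> 0 \<le> \<delta>' \<and> \<delta>' \<le> \<delta> / mY (received_range N C)}"
    (is "_ = Sup ?B")
proof -
  let ?A = "{ereal (log 2 (real (card C))) | C. codebook Xs C \<and> distinguishable mY Ys N \<delta> C}"
  have cap: "capacity_delta Xs mY Ys N \<delta> = Sup ?A" unfolding capacity_delta_def by simp
  have Nbig: "\<delta> < mY (N x)" if "x \<in> Xs" for x using xstar_min that delta_lt by fastforce
  have Nne: "N x \<noteq> {}" if "x \<in> Xs" for x
    using Nbig[OF that] delta_nonneg mY_unc unfolding uncertainty_function_def by auto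
  have zeroA: "0 \<le> Sup ?A"
  proof -
    have "codebook Xs {xstar}" using xstar_in unfolding codebook_def by auto
    moreover have "distinguishable mY Ys N \<delta> {xstar}" unfolding distinguishable_def by auto
    ultimately have "ereal (log 2 (real (card {xstar}))) \<in> ?A" by blast
    then have "ereal (log 2 (real (card {xstar}))) \<le> Sup ?A" by (rule Sup_upper)
    then show ?thesis by (simp add: zero_ereal_def)
  qed
  have UY: "received_range N C \<subseteq> Ys" if "codebook Xs C" for C
    using that N_out unfolding codebook_def received_range_def by blast
  have Upos: "0 < mY (received_range N C)" if C: "codebook Xs C" for C
  proof -
    obtain x where x: "x \<in> C" using C unfolding codebook_def by blast
    then have "x \<in> Xs" using C unfolding codebook_def by blast
    then have "N x \<noteq> {}" by (rule Nne)
    then have "received_range N C \<noteq> {}" using x unfolding received_range_def by blast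
    then show ?thesis using mY_unc UY[OF C] unfolding uncertainty_function_def by blast
  qed
  have BA: "Sup ?B \<le> Sup ?A"
  proof (rule Sup_least)
    fix b assume "b \<in> ?B"
    then obtain C \<delta>' where b: "b = delta_mutual_info mY (received_range N C) C (cond_received N C) (\<delta>' / real (card C))"
      and C: "codebook Xs C" and d1: "0 \<le> \<delta>'" and d2: "\<delta>' \<le> \<delta> / mY (received_range N C)" by blast
    let ?U = "received_range N C" and ?F = "cond_received N C" and ?d = "\<delta>' / real (card C)"
    have cC: "card C > 0" using C unfolding codebook_def by auto
    have dU: "\<delta>' * mY ?U \<le> \<delta>" using d2 Upos[OF C] by (simp add: field_simps)
    have dmU: "?d * mY ?U \<le> \<delta> / card C" using dU cC by (simp add: field_simps)
    have "\<delta> / card C \<le> \<delta>" using cC delta_nonneg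
      by (simp add: divide_le_eq_1 mult_le_cancel_left1 divide_le_eq)
    then have big: "\<forall>w\<in>C. ?d * mY ?U < mY (?F w)"
      using Nbig cond_rec[of _ C N] dmU C unfolding codebook_def by fastforce
    show "b \<le> Sup ?A"
    proof (cases "\<exists>S. overlap_family mY ?U C ?F ?d S")
      case False
      have b0: "b = 0" unfolding b delta_mutual_info_def using False by (simp only: if_False)
      show ?thesis unfolding b0 by (rule zeroA)
    next
      case True
      define S where "S = (SOME S. overlap_family mY ?U C ?F ?d S)"
      have ov: "overlap_family mY ?U C ?F ?d S" unfolding S_def using True by (rule someI_ex)
      then have adm: "admissible_family mY ?U C ?F ?d S" unfolding overlap_family_def by blast
      obtain f where f: "inj_on f S" "f ` S \<subseteq> C" "\<forall>T\<in>S. ?F (f T) \<subseteq> T"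
        using key_inj[OF adm mY_unc UY[OF C] big] by blast
      have finC: "finite C" using C unfolding codebook_def by blast
      have finS: "finite S" using f(1) finite_subset[OF f(2) finC] by (rule finite_imageD[rotated])
      have bS: "b = ereal (log 2 (real (card S)))"
        using b True finS unfolding delta_mutual_info_def S_def[symmetric] by (simp add: Let_def)
      show ?thesis
      proof (cases "S = {}")
        case True then show ?thesis using bS zeroA by (simp add: zero_ereal_def log_def)
      next
        case False
        let ?C' = "f ` S"
        have cardC': "card ?C' = card S" using f(1) card_image by blast
        have cb: "codebook Xs ?C'" using False f(2) C finS unfolding codebook_def by auto
        have cle: "card ?C' \<le> card C" using card_mono[OF finC f(2)] .
        have c'pos: "card ?C' > 0" using cb unfolding codebook_def by auto
        have "distinguishable mY Ys N \<delta> ?C'"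
          unfolding distinguishable_def e_N_def mY_norm
        proof (intro ballI impI)
          fix x1 x2 assume x: "x1 \<in> ?C'" "x2 \<in> ?C'" "x1 \<noteq> x2"
          then obtain S1 S2 where s: "S1 \<in> S" "S2 \<in> S" "x1 = f S1" "x2 = f S2" by blast
          then have "S1 \<noteq> S2" using x(3) by blast
          then have le: "mY (S1 \<inter> S2) \<le> ?d * mY ?U" using adm_D(3)[OF adm] s by blast
          have xC: "x1 \<in> C" "x2 \<in> C" using x f(2) by auto
          have sub: "N x1 \<inter> N x2 \<subseteq> S1 \<inter> S2" using f(3) s cond_rec[of _ C N, OF xC(1)] cond_rec[of _ C N, OF xC(2)] by auto
          have allU: "\<forall>T\<in>S. T \<subseteq> ?U" by (rule adm_D(1)[OF adm])
          have "S1 \<subseteq> ?U" by (rule bspec[OF allU s(1)])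
          then have "mY (N x1 \<inter> N x2) \<le> mY (S1 \<inter> S2)" using UY[OF C] by (intro unc_mono[OF mY_unc sub]) blast
          moreover have "\<delta> / card C \<le> \<delta> / card ?C'"
            using cle c'pos delta_nonneg by (simp add: frac_le)
          ultimately show "mY (N x1 \<inter> N x2) / 1 \<le> \<delta> / real (card ?C')" using le dmU by simp
        qed
        then have "ereal (log 2 (real (card ?C'))) \<in> ?A" using cb by blast
        then have "ereal (log 2 (real (card ?C'))) \<le> Sup ?A" by (rule Sup_upper)
        then show ?thesis unfolding bS cardC' .
      qed
    qed
  qed
  have AB: "Sup ?A \<le> Sup ?B"
  proof (rule Sup_least)
    fix a assume "a \<in> ?A"
    then obtain C where a: "a = ereal (log 2 (real (card C)))" and C: "codebook Xs C"
      and dist: "distinguishable mY Ys N \<delta> C" by blast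
    let ?U = "received_range N C" and ?F = "cond_received N C"
    define \<delta>' where "\<delta>' = \<delta> / mY ?U"
    let ?d = "\<delta>' / real (card C)"
    have cC: "card C > 0" using C unfolding codebook_def by auto
    have finC: "finite C" using C unfolding codebook_def by blast
    have CX: "C \<subseteq> Xs" using C unfolding codebook_def by blast
    have d1: "0 \<le> \<delta>'" unfolding \<delta>'_def using delta_nonneg Upos[OF C] by simp
    have dmU: "?d * mY ?U = \<delta> / card C" unfolding \<delta>'_def using Upos[OF C] cC by (simp add: field_simps)
    have dle: "\<delta> / card C \<le> \<delta>" using cC delta_nonneg
      by (simp add: divide_le_eq_1 mult_le_cancel_left1 divide_le_eq)
    have big: "\<forall>w\<in>C. ?d * mY ?U < mY (?F w)"
      using Nbig cond_rec[of _ C N] dmU dle CX by fastforce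
    have ov_e: "mY (N x1 \<inter> N x2) \<le> \<delta> / card C" if "x1 \<in> C" "x2 \<in> C" "x1 \<noteq> x2" for x1 x2
      using dist that unfolding distinguishable_def e_N_def mY_norm by auto
    have Ninj: "inj_on N C"
    proof (rule inj_onI, rule ccontr)
      fix x1 x2 assume x: "x1 \<in> C" "x2 \<in> C" "N x1 = N x2" "x1 \<noteq> x2"
      then have "mY (N x1) \<le> \<delta> / card C" using ov_e by force
      then show False using Nbig[of x1] x CX dle by force
    qed
    define S0 where "S0 = N ` C"
    have cardS0: "card S0 = card C" unfolding S0_def using Ninj card_image by blast
    have finS0: "finite S0" unfolding S0_def using finC by blast
    have adm0: "admissible_family mY ?U C ?F ?d S0"
      unfolding admissible_family_def
    proof (intro conjI)
      show "\<forall>S\<in>S0. S \<subseteq> ?U" unfolding S0_def received_range_def by blast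
      show "\<Union> S0 = ?U" unfolding S0_def received_range_def by blast
      show "\<forall>S\<in>S0. delta_connected_set mY ?U C ?F ?d S \<and> (\<exists>w\<in>C. ?F w \<subseteq> S)"
      proof
        fix S assume "S \<in> S0"
        then obtain x where x: "x \<in> C" "S = N x" unfolding S0_def by blast
        have "delta_connected_set mY ?U C ?F ?d S"
          unfolding delta_connected_set_def delta_connected_def
        proof (intro ballI)
          fix u u' assume "u \<in> S" "u' \<in> S"
          then show "\<exists>ws. ws \<noteq> [] \<and> set ws \<subseteq> C \<and> u \<in> ?F (hd ws) \<and> u' \<in> ?F (last ws) \<and>
           (\<forall>i. 0 < i \<and> i < length ws \<longrightarrow> mY (?F (ws ! i) \<inter> ?F (ws ! (i - 1))) / mY ?U > ?d)"
            using x cond_rec[of _ C N, OF x(1)] by (intro exI[of _ "[x]"]) auto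
        qed
        then show "delta_connected_set mY ?U C ?F ?d S \<and> (\<exists>w\<in>C. ?F w \<subseteq> S)"
          using x cond_rec[of _ C N, OF x(1)] by auto
      qed
      show "\<forall>S1\<in>S0. \<forall>S2\<in>S0. S1 \<noteq> S2 \<longrightarrow> mY (S1 \<inter> S2) \<le> ?d * mY ?U"
        unfolding S0_def dmU using ov_e by fastforce
      show "\<forall>w\<in>C. \<exists>S\<in>S0. ?F w \<subseteq> S" unfolding S0_def using cond_rec[of _ C N] by fastforce
    qed
    have ov0: "overlap_family mY ?U C ?F ?d S0"
      unfolding overlap_family_def
    proof (intro conjI allI impI)
      show "admissible_family mY ?U C ?F ?d S0" by (rule adm0)
      fix S' assume adm: "admissible_family mY ?U C ?F ?d S'"
      obtain f where f: "inj_on f S'" "f ` S' \<subseteq> C" "\<forall>T\<in>S'. ?F (f T) \<subseteq> T"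
        using key_inj[OF adm mY_unc UY[OF C] big] by blast
      have "inj_on (N \<circ> f) S'" using f(1,2) Ninj by (simp add: comp_inj_on inj_on_subset)
      moreover have "(N \<circ> f) ` S' \<subseteq> S0" unfolding S0_def using f(2) by auto
      ultimately show "\<exists>g. inj_on g S' \<and> g ` S' \<subseteq> S0" by blast
    qed
    have ex: "\<exists>S. overlap_family mY ?U C ?F ?d S" using ov0 by blast
    define S where "S = (SOME S. overlap_family mY ?U C ?F ?d S)"
    have ov: "overlap_family mY ?U C ?F ?d S" unfolding S_def using ex by (rule someI_ex)
    have admS: "admissible_family mY ?U C ?F ?d S" using ov unfolding overlap_family_def by (rule conjunct1)
    have max0: "\<forall>S'. admissible_family mY ?U C ?F ?d S' \<longrightarrow> (\<exists>f. inj_on f S' \<and> f ` S' \<subseteq> S0)"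
      using ov0 unfolding overlap_family_def by (rule conjunct2)
    have maxS: "\<forall>S'. admissible_family mY ?U C ?F ?d S' \<longrightarrow> (\<exists>f. inj_on f S' \<and> f ` S' \<subseteq> S)"
      using ov unfolding overlap_family_def by (rule conjunct2)
    have "\<exists>f. inj_on f S \<and> f ` S \<subseteq> S0" using mp[OF spec[OF max0, of S] admS] .
    then obtain g where g: "inj_on g S" "g ` S \<subseteq> S0" by blast
    have "\<exists>f. inj_on f S0 \<and> f ` S0 \<subseteq> S" using mp[OF spec[OF maxS, of S0] adm0] .
    then obtain h where h: "inj_on h S0" "h ` S0 \<subseteq> S" by blast
    have finS: "finite S" using g(1) finite_subset[OF g(2) finS0] by (rule finite_imageD[rotated])
    have "card S \<le> card S0" using card_inj_on_le[OF g(1) g(2) finS0] .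
    moreover have "card S0 \<le> card S" using card_inj_on_le[OF h(1) h(2) finS] .
    ultimately have cS: "card S = card C" using cardS0 by simp
    have I: "delta_mutual_info mY ?U C ?F ?d = a"
      using ex finS cS a unfolding delta_mutual_info_def S_def[symmetric] by (simp add: Let_def)
    have d2: "\<delta>' \<le> \<delta> / mY ?U" unfolding \<delta>'_def by simp
    have "delta_mutual_info mY ?U C ?F ?d \<in> ?B"
      by (rule CollectI, rule exI[of _ C], rule exI[of _ \<delta>'], intro conjI refl C d1 d2)
    then have "delta_mutual_info mY ?U C ?F ?d \<le> Sup ?B" by (rule Sup_upper)
    then show "a \<le> Sup ?B" unfolding I .
  qed
  show ?thesis unfolding cap by (rule antisym[OF AB BA])
qed

end
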